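(* Let $\Gamma$ be a group and let $\mathbb{K}$ be a field. Then the set of normal subgroups $N \subset \Gamma$ such that the group algebra $\mathbb{K}[\Gamma/N]$ is stably finite is closed (and hence compact) in $\mathcal{N}(\Gamma)$.
   Context: $\mathcal{N}(\Gamma)$ denotes the set of normal subgroups of $\Gamma$, viewed as a subset of $\mathcal{P}(\Gamma) = \{0,1\}^\Gamma$ with the prodiscrete (product of discrete) topology. A ring $R$ is stably finite if every square matrix over $R$ which is one-sided invertible is two-sided invertible. *)

theory Defs
  imports "HOL-Analysis.Analysis" "HOL-Algebra.Algebra"
begin

definition galg_carrier :: "('b, 'c) monoid_scheme \<Rightarrow> ('b \<Rightarrow> 'k::field) set" where
  "galg_carrier H = {f. {x. f x \<noteq> 0} \<subseteq> carrier H \<and> finite {x. f x \<noteq> 0}}"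

definition galg_mult ::
  "('b, 'c) monoid_scheme \<Rightarrow> ('b \<Rightarrow> 'k::field) \<Rightarrow> ('b \<Rightarrow> 'k) \<Rightarrow> ('b \<Rightarrow> 'k)" where
  "galg_mult H f g = (\<lambda>x. if x \<in> carrier H
      then (\<Sum>y\<in>{y \<in> carrier H. f y \<noteq> 0}. f y * g (inv\<^bsub>H\<^esub> y \<otimes>\<^bsub>H\<^esub> x))
      else 0)"

definition group_algebra :: "('b, 'c) monoid_scheme \<Rightarrow> ('b \<Rightarrow> 'k::field) ring" where
  "group_algebra H =
     \<lparr> carrier = galg_carrier H,
       monoid.mult = galg_mult H,
       monoid.one = (\<lambda>x. if x = \<one>\<^bsub>H\<^esub> then 1 else 0),
       ring.zero = (\<lambda>x. 0),
       ring.add = (\<lambda>f g x. f x + g x) \<rparr>"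

text \<open>n x n matrices over R are represented as functions nat => nat => elements,
  only the entries with indices < n being relevant.\<close>

definition mats :: "('r, 'm) ring_scheme \<Rightarrow> nat \<Rightarrow> (nat \<Rightarrow> nat \<Rightarrow> 'r) set" where
  "mats R n = {A. \<forall>i<n. \<forall>j<n. A i j \<in> carrier R}"

definition mat_mul :: "('r, 'm) ring_scheme \<Rightarrow> nat \<Rightarrow> (nat \<Rightarrow> nat \<Rightarrow> 'r) \<Rightarrow> (nat \<Rightarrow> nat \<Rightarrow> 'r) \<Rightarrow> (nat \<Rightarrow> nat \<Rightarrow> 'r)" where
  "mat_mul R n A B = (\<lambda>i j. if i < n \<and> j < n
      then (\<Oplus>\<^bsub>R\<^esub> k\<in>{..<n}. A i k \<otimes>\<^bsub>R\<^esub> B k j) else \<zero>\<^bsub>R\<^esub>)"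

definition mat_id :: "('r, 'm) ring_scheme \<Rightarrow> nat \<Rightarrow> (nat \<Rightarrow> nat \<Rightarrow> 'r)" where
  "mat_id R n = (\<lambda>i j. if i < n \<and> j < n \<and> i = j then \<one>\<^bsub>R\<^esub> else \<zero>\<^bsub>R\<^esub>)"

definition stably_finite :: "('r, 'm) ring_scheme \<Rightarrow> bool" where
  "stably_finite R \<longleftrightarrow>
     (\<forall>n A B. A \<in> mats R n \<and> B \<in> mats R n \<and> mat_mul R n A B = mat_id R n
        \<longrightarrow> mat_mul R n B A = mat_id R n)"

definition powerset_topology :: "('a, 'c) monoid_scheme \<Rightarrow> ('a \<Rightarrow> bool) topology" where
  "powerset_topology G = product_topology (\<lambda>_. discrete_topology (UNIV :: bool set)) (carrier G)"

text \<open>A subset N of the carrier is identified with its indicator function on the carrier.\<close>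
definition set_to_point :: "('a, 'c) monoid_scheme \<Rightarrow> 'a set \<Rightarrow> ('a \<Rightarrow> bool)" where
  "set_to_point G N = restrict (\<lambda>x. x \<in> N) (carrier G)"

definition normal_subgroup_space :: "('a, 'c) monoid_scheme \<Rightarrow> ('a \<Rightarrow> bool) set" where
  "normal_subgroup_space G = set_to_point G ` {N. N \<lhd> G}"

end

theory Submission
  imports Defs
begin

definition supp :: "('b \<Rightarrow> 'k::zero) \<Rightarrow> 'b set" where
  "supp f = {x. f x \<noteq> 0}"

lemma galg_carrier_iff: "f \<in> galg_carrier H \<longleftrightarrow> supp f \<subseteq> carrier H \<and> finite (supp f)"
  unfolding galg_carrier_def supp_def by simp

lemma ga_simps [simp]:
  "carrier (group_algebra H) = galg_carrier H"
  "monoid.mult (group_algebra H) = galg_mult H"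
  "monoid.one (group_algebra H) = (\<lambda>x. if x = \<one>\<^bsub>H\<^esub> then 1 else 0)"
  "ring.zero (group_algebra H) = (\<lambda>x. 0)"
  "ring.add (group_algebra H) = (\<lambda>f g x. f x + g x)"
  unfolding group_algebra_def by simp_all

lemma ga_abelian_monoid: "abelian_monoid (group_algebra H :: ('b \<Rightarrow> 'k::field) ring)"
proof (rule abelian_monoidI)
  fix x y :: "'b \<Rightarrow> 'k"
  assume "x \<in> carrier (group_algebra H)" "y \<in> carrier (group_algebra H)"
  then show "x \<oplus>\<^bsub>group_algebra H\<^esub> y \<in> carrier (group_algebra H)"
  proof -
    have "supp (\<lambda>z. x z + y z) \<subseteq> supp x \<union> supp y" unfolding supp_def by auto
    then show ?thesis using \<open>x \<in> _\<close> \<open>y \<in> _\<close> unfolding ga_simps galg_carrier_iff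
      by (meson finite_UnI finite_subset le_sup_iff order_trans)
  qed
next
  show "\<zero>\<^bsub>group_algebra H\<^esub> \<in> carrier (group_algebra H)"
    by (simp add: galg_carrier_iff supp_def)
qed (simp_all add: add_ac)

lemma ga_finsum:
  assumes "finite A" "\<And>k. k \<in> A \<Longrightarrow> f k \<in> galg_carrier H"
  shows "finsum (group_algebra H :: ('b \<Rightarrow> 'k::field) ring) f A = (\<lambda>x. \<Sum>k\<in>A. f k x)"
  using assms
proof (induction A rule: finite_induct)
  case empty
  then show ?case using abelian_monoid.finsum_empty[OF ga_abelian_monoid] by simp
next
  case (insert a A)
  have "finsum (group_algebra H :: ('b \<Rightarrow> 'k::field) ring) f (insert a A)
     = f a \<oplus>\<^bsub>group_algebra H\<^esub> finsum (group_algebra H :: ('b \<Rightarrow> 'k::field) ring) f A"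
    by (rule abelian_monoid.finsum_insert[OF ga_abelian_monoid]) (use insert in auto)
  then show ?case using insert by simp
qed

definition push :: "('a, 'c) monoid_scheme \<Rightarrow> 'a set \<Rightarrow> ('a \<Rightarrow> 'k::field) \<Rightarrow> 'a set \<Rightarrow> 'k" where
  "push G N \<phi> C = (if C \<in> rcosets\<^bsub>G\<^esub> N then \<Sum>y\<in>{y\<in>supp \<phi>. y \<in> C}. \<phi> y else 0)"

context normal
begin

lemma carrier_Mod: "carrier (G Mod H) = rcosets H"
  by (simp add: FactGroup_def)

lemma rcosets_cases:
  assumes "C \<in> rcosets H" obtains c where "c \<in> carrier G" "C = H #> c"
  using assms unfolding RCOSETS_def by auto

lemma mem_rcos_iff:
  assumes "x \<in> carrier G" "y \<in> carrier G"
  shows "y \<in> H #> x \<longleftrightarrow> x \<otimes> inv y \<in> H"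
proof -
  have "y \<in> H #> x \<longleftrightarrow> y \<otimes> inv x \<in> H"
    using rcos_module_imp[OF is_group assms(1)] rcos_module_rev[OF is_group assms] by blast
  also have "\<dots> \<longleftrightarrow> x \<otimes> inv y \<in> H"
  proof
    assume "y \<otimes> inv x \<in> H"
    then have "inv (y \<otimes> inv x) \<in> H" by (rule m_inv_closed)
    then show "x \<otimes> inv y \<in> H" using assms by (simp add: inv_mult_group)
  next
    assume "x \<otimes> inv y \<in> H"
    then have "inv (x \<otimes> inv y) \<in> H" by (rule m_inv_closed)
    then show "y \<otimes> inv x \<in> H" using assms by (simp add: inv_mult_group)
  qed
  finally show ?thesis .
qed

lemma push_T:
  assumes "finite T" "supp \<phi> \<subseteq> T"
  shows "push G H \<phi> C = (if C \<in> rcosets H then \<Sum>y\<in>{y\<in>T. y \<in> C}. \<phi> y else 0)"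
proof -
  have "(\<Sum>y\<in>{y\<in>supp \<phi>. y \<in> C}. \<phi> y) = (\<Sum>y\<in>{y\<in>T. y \<in> C}. \<phi> y)"
    by (rule sum.mono_neutral_left) (use assms in \<open>auto simp: supp_def\<close>)
  then show ?thesis unfolding push_def by simp
qed

lemma push_carrier:
  assumes "\<phi> \<in> galg_carrier G"
  shows "push G H \<phi> \<in> galg_carrier (G Mod H)"
proof -
  have s: "supp (push G H \<phi>) \<subseteq> (\<lambda>y. H #> y) ` supp \<phi>"
  proof
    fix C assume "C \<in> supp (push G H \<phi>)"
    then have C: "C \<in> rcosets H" "(\<Sum>y\<in>{y\<in>supp \<phi>. y \<in> C}. \<phi> y) \<noteq> 0"
      unfolding supp_def push_def by (auto split: if_splits)
    then obtain y where y: "y \<in> supp \<phi>" "y \<in> C" by (metis (no_types, lifting) empty_Collect_eq sum.empty)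
    obtain c where c: "c \<in> carrier G" "C = H #> c" using C(1) rcosets_cases by blast
    have "C = H #> y" using repr_independence[OF _ c(1) subgroup_axioms] y(2) c(2) by blast
    then show "C \<in> (\<lambda>y. H #> y) ` supp \<phi>" using y by blast
  qed
  have "(\<lambda>y. H #> y) ` supp \<phi> \<subseteq> carrier (G Mod H)"
    using assms unfolding galg_carrier_iff carrier_Mod RCOSETS_def by auto
  then show ?thesis using s assms unfolding galg_carrier_iff
    by (meson finite_imageI finite_subset order_trans)
qed


lemma supp_in: "\<phi> \<in> galg_carrier K \<Longrightarrow> {y \<in> carrier K. \<phi> y \<noteq> 0} = supp \<phi>"
  unfolding galg_carrier_iff supp_def by auto

lemma push_supp:
  assumes "\<phi> \<in> galg_carrier G"
  shows "supp (push G H \<phi>) \<subseteq> (\<lambda>y. H #> y) ` supp \<phi>"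
proof
  fix C assume "C \<in> supp (push G H \<phi>)"
  then have C: "C \<in> rcosets H" "(\<Sum>y\<in>{y\<in>supp \<phi>. y \<in> C}. \<phi> y) \<noteq> 0"
    unfolding supp_def push_def by (auto split: if_splits)
  then obtain y where y: "y \<in> supp \<phi>" "y \<in> C" by (metis (no_types, lifting) empty_Collect_eq sum.empty)
  obtain c where c: "c \<in> carrier G" "C = H #> c" using C(1) rcosets_cases by blast
  have "C = H #> y" using repr_independence[OF _ c(1) subgroup_axioms] y(2) c(2) by blast
  then show "C \<in> (\<lambda>y. H #> y) ` supp \<phi>" using y by blast
qed

lemma conj_iff:
  assumes "a \<in> carrier G" "g \<in> carrier G"
  shows "g \<otimes> a \<otimes> inv g \<in> H \<longleftrightarrow> a \<in> H"
proof
  have n: "\<And>g h. g \<in> carrier G \<Longrightarrow> h \<in> H \<Longrightarrow> g \<otimes> h \<otimes> inv g \<in> H"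
    using normal_inv_iff normal_axioms by blast
  assume "g \<otimes> a \<otimes> inv g \<in> H"
  from n[OF inv_closed[OF assms(2)] this] show "a \<in> H"
    using assms by (simp add: m_assoc flip: m_assoc[of "inv g" g a])
next
  assume "a \<in> H"
  show "g \<otimes> a \<otimes> inv g \<in> H"
    using normal_inv_iff normal_axioms \<open>a \<in> H\<close> assms(2) by blast
qed

lemma shift_rcos:
  assumes "x \<in> carrier G" "y \<in> carrier G" "w \<in> carrier G"
  shows "w \<in> H #> (inv y \<otimes> x) \<longleftrightarrow> y \<otimes> w \<in> H #> x"
proof -
  have "w \<in> H #> (inv y \<otimes> x) \<longleftrightarrow> (inv y \<otimes> x) \<otimes> inv w \<in> H"
    using assms by (intro mem_rcos_iff) auto
  also have "(inv y \<otimes> x) \<otimes> inv w = inv y \<otimes> (x \<otimes> inv (y \<otimes> w)) \<otimes> inv (inv y)"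
    using assms by (simp add: m_assoc inv_mult_group)
  also have "\<dots> \<in> H \<longleftrightarrow> x \<otimes> inv (y \<otimes> w) \<in> H"
    using assms by (intro conj_iff) auto
  also have "\<dots> \<longleftrightarrow> y \<otimes> w \<in> H #> x"
    using assms by (intro mem_rcos_iff[symmetric]) auto
  finally show ?thesis .
qed


lemma conv_supp:
  assumes "\<phi> \<in> galg_carrier G" "\<psi> \<in> galg_carrier G"
  shows "supp (galg_mult G \<phi> \<psi>) \<subseteq> (\<lambda>(y, w). y \<otimes> w) ` (supp \<phi> \<times> supp \<psi>)"
proof
  fix z assume "z \<in> supp (galg_mult G \<phi> \<psi>)"
  then have z: "z \<in> carrier G" "(\<Sum>y\<in>supp \<phi>. \<phi> y * \<psi> (inv y \<otimes> z)) \<noteq> 0"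
    unfolding supp_def galg_mult_def supp_in[OF assms(1)] by (auto split: if_splits)
  then obtain y where y: "y \<in> supp \<phi>" "\<phi> y * \<psi> (inv y \<otimes> z) \<noteq> 0"
  proof -
    have "\<not> (\<forall>y\<in>supp \<phi>. \<phi> y * \<psi> (inv y \<otimes> z) = 0)"
    proof
      assume "\<forall>y\<in>supp \<phi>. \<phi> y * \<psi> (inv y \<otimes> z) = 0"
      then have "(\<Sum>y\<in>supp \<phi>. \<phi> y * \<psi> (inv y \<otimes> z)) = 0" by (rule sum.neutral)
      with z(2) show False by simp
    qed
    then show ?thesis using that by blast
  qed
  have yc: "y \<in> carrier G" using y(1) assms(1) unfolding galg_carrier_iff by auto
  have "inv y \<otimes> z \<in> supp \<psi>" using y(2) unfolding supp_def by auto
  moreover have "z = y \<otimes> (inv y \<otimes> z)" using yc z(1) by (simp add: m_assoc flip: m_assoc[of y "inv y" z])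
  ultimately show "z \<in> (\<lambda>(y, w). y \<otimes> w) ` (supp \<phi> \<times> supp \<psi>)" using y(1) by force
qed

lemma conv_carrier:
  assumes "\<phi> \<in> galg_carrier G" "\<psi> \<in> galg_carrier G"
  shows "galg_mult G \<phi> \<psi> \<in> galg_carrier G"
proof -
  have "supp (galg_mult G \<phi> \<psi>) \<subseteq> carrier G" unfolding supp_def galg_mult_def by auto
  moreover have "finite ((\<lambda>(y, w). y \<otimes> w) ` (supp \<phi> \<times> supp \<psi>))"
    using assms unfolding galg_carrier_iff by auto
  ultimately show ?thesis unfolding galg_carrier_iff using conv_supp[OF assms] finite_subset by blast
qed

lemma push_hom:
  assumes "\<phi> \<in> galg_carrier G" "\<psi> \<in> galg_carrier G"
  shows "push G H (galg_mult G \<phi> \<psi>) = galg_mult (G Mod H) (push G H \<phi>) (push G H \<psi>)"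
proof
  fix C
  define Z where "Z = (\<lambda>(y, w). y \<otimes> w) ` (supp \<phi> \<times> supp \<psi>)"
  have Sphi: "finite (supp \<phi>)" "supp \<phi> \<subseteq> carrier G" and Spsi: "finite (supp \<psi>)" "supp \<psi> \<subseteq> carrier G"
    using assms unfolding galg_carrier_iff by auto
  have Zf: "finite Z" "Z \<subseteq> carrier G" unfolding Z_def using Sphi Spsi by auto
  show "push G H (galg_mult G \<phi> \<psi>) C = galg_mult (G Mod H) (push G H \<phi>) (push G H \<psi>) C"
  proof (cases "C \<in> rcosets H")
    case False
    then show ?thesis unfolding push_def galg_mult_def carrier_Mod by simp
  next
    case True
    then obtain x where x: "x \<in> carrier G" "C = H #> x" using rcosets_cases by blast
    have inner: "(\<Sum>z\<in>{z\<in>Z. z \<in> C}. \<psi> (inv y \<otimes> z)) = (\<Sum>w\<in>{w\<in>supp \<psi>. w \<in> H #> (inv y \<otimes> x)}. \<psi> w)"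
      if y: "y \<in> supp \<phi>" for y
    proof -
      have yc: "y \<in> carrier G" using y Sphi by auto
      have inj: "inj_on (\<lambda>w. y \<otimes> w) {w\<in>supp \<psi>. w \<in> H #> (inv y \<otimes> x)}"
        using yc Spsi by (intro inj_onI) (auto simp: subset_iff l_cancel)
      have "(\<Sum>w\<in>{w\<in>supp \<psi>. w \<in> H #> (inv y \<otimes> x)}. \<psi> w)
          = (\<Sum>w\<in>{w\<in>supp \<psi>. w \<in> H #> (inv y \<otimes> x)}. \<psi> (inv y \<otimes> (y \<otimes> w)))"
        using yc Spsi by (intro sum.cong) (auto simp flip: m_assoc)
      also have "\<dots> = (\<Sum>z\<in>(\<lambda>w. y \<otimes> w) ` {w\<in>supp \<psi>. w \<in> H #> (inv y \<otimes> x)}. \<psi> (inv y \<otimes> z))"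
        using sum.reindex[OF inj, of "\<lambda>z. \<psi> (inv y \<otimes> z)"] by (simp add: o_def)
      also have "\<dots> = (\<Sum>z\<in>{z\<in>Z. z \<in> C}. \<psi> (inv y \<otimes> z))"
      proof (rule sum.mono_neutral_left)
        show "finite {z\<in>Z. z \<in> C}" using Zf by simp
        show "(\<lambda>w. y \<otimes> w) ` {w\<in>supp \<psi>. w \<in> H #> (inv y \<otimes> x)} \<subseteq> {z\<in>Z. z \<in> C}"
        proof
          fix z assume "z \<in> (\<lambda>w. y \<otimes> w) ` {w\<in>supp \<psi>. w \<in> H #> (inv y \<otimes> x)}"
          then obtain w where w: "w \<in> supp \<psi>" "w \<in> H #> (inv y \<otimes> x)" "z = y \<otimes> w" by blast
          have "z \<in> C" using shift_rcos[OF x(1) yc, of w] w Spsi x(2) by auto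
          moreover have "z \<in> Z" unfolding Z_def using w y by force
          ultimately show "z \<in> {z\<in>Z. z \<in> C}" by simp
        qed
        show "\<forall>z\<in>{z\<in>Z. z \<in> C} - (\<lambda>w. y \<otimes> w) ` {w\<in>supp \<psi>. w \<in> H #> (inv y \<otimes> x)}. \<psi> (inv y \<otimes> z) = 0"
        proof (rule ballI, rule ccontr)
          fix z assume z: "z \<in> {z\<in>Z. z \<in> C} - (\<lambda>w. y \<otimes> w) ` {w\<in>supp \<psi>. w \<in> H #> (inv y \<otimes> x)}"
            and nz: "\<psi> (inv y \<otimes> z) \<noteq> 0"
          have zc: "z \<in> carrier G" using z Zf by auto
          have ws: "inv y \<otimes> z \<in> supp \<psi>" using nz unfolding supp_def by simp
          have ze: "z = y \<otimes> (inv y \<otimes> z)" using yc zc by (simp flip: m_assoc)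
          have "inv y \<otimes> z \<in> H #> (inv y \<otimes> x)"
            using shift_rcos[OF x(1) yc, of "inv y \<otimes> z"] yc zc z x(2) ze by auto
          then show False using z ws ze by blast
        qed
      qed
      finally show ?thesis by simp
    qed
    have "push G H (galg_mult G \<phi> \<psi>) C = (\<Sum>z\<in>{z\<in>Z. z \<in> C}. galg_mult G \<phi> \<psi> z)"
      using push_T[OF Zf(1) conv_supp[OF assms, folded Z_def]] True by simp
    also have "\<dots> = (\<Sum>z\<in>{z\<in>Z. z \<in> C}. \<Sum>y\<in>supp \<phi>. \<phi> y * \<psi> (inv y \<otimes> z))"
      using Zf unfolding galg_mult_def supp_in[OF assms(1)] by (intro sum.cong) auto
    also have "\<dots> = (\<Sum>y\<in>supp \<phi>. \<Sum>z\<in>{z\<in>Z. z \<in> C}. \<phi> y * \<psi> (inv y \<otimes> z))"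
      by (rule sum.swap)
    also have "\<dots> = (\<Sum>y\<in>supp \<phi>. \<phi> y * (\<Sum>w\<in>{w\<in>supp \<psi>. w \<in> H #> (inv y \<otimes> x)}. \<psi> w))"
      by (intro sum.cong refl) (simp add: inner sum_distrib_left[symmetric])
    finally have L: "push G H (galg_mult G \<phi> \<psi>) C = \<dots>" .
    define cos where "cos = (\<lambda>y. H #> y)"
    define R where "R = (\<lambda>D. push G H \<psi> (inv\<^bsub>G Mod H\<^esub> D \<otimes>\<^bsub>G Mod H\<^esub> C))"
    have cosR: "R (cos y) = (\<Sum>w\<in>{w\<in>supp \<psi>. w \<in> H #> (inv y \<otimes> x)}. \<psi> w)" if "y \<in> carrier G" for y
    proof -
      have "cos y \<in> carrier (G Mod H)" unfolding cos_def carrier_Mod RCOSETS_def using that by auto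
      then have iv: "inv\<^bsub>G Mod H\<^esub> (H #> y) = H #> inv y"
        using inv_FactGroup rcos_inv that unfolding cos_def by simp
      have "inv\<^bsub>G Mod H\<^esub> cos y \<otimes>\<^bsub>G Mod H\<^esub> C = H #> (inv y \<otimes> x)"
        unfolding cos_def x(2) iv using that x(1) by (simp add: rcos_sum)
      moreover have "H #> (inv y \<otimes> x) \<in> rcosets H" unfolding RCOSETS_def using that x(1) by auto
      ultimately show ?thesis unfolding R_def push_def by simp
    qed
    have "galg_mult (G Mod H) (push G H \<phi>) (push G H \<psi>) C
        = (\<Sum>D\<in>supp (push G H \<phi>). push G H \<phi> D * R D)"
      unfolding galg_mult_def R_def supp_in[OF push_carrier[OF assms(1)]] using True carrier_Mod by simp
    also have "\<dots> = (\<Sum>D\<in>cos ` supp \<phi>. push G H \<phi> D * R D)"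
      by (rule sum.mono_neutral_left) (use push_supp[OF assms(1)] Sphi in \<open>auto simp: cos_def supp_def\<close>)
    also have "\<dots> = (\<Sum>D\<in>cos ` supp \<phi>. \<Sum>y\<in>{y\<in>supp \<phi>. cos y = D}. \<phi> y * R (cos y))"
    proof (rule sum.cong[OF refl])
      fix D assume "D \<in> cos ` supp \<phi>"
      then obtain d where d: "d \<in> supp \<phi>" "D = cos d" by blast
      have dc: "d \<in> carrier G" using d Sphi by auto
      have Dr: "D \<in> rcosets H" unfolding d(2) cos_def RCOSETS_def using dc by auto
      have eq: "{y\<in>supp \<phi>. y \<in> D} = {y\<in>supp \<phi>. cos y = D}"
      proof (intro Collect_cong conj_cong refl)
        fix y assume "y \<in> supp \<phi>"
        then have yc: "y \<in> carrier G" using Sphi by auto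
        show "y \<in> D \<longleftrightarrow> cos y = D"
          unfolding d(2) cos_def
          using repr_independence[OF _ dc subgroup_axioms, of y] repr_independenceD[OF subgroup_axioms yc, of d]
          by auto
      qed
      show "push G H \<phi> D * R D = (\<Sum>y\<in>{y\<in>supp \<phi>. cos y = D}. \<phi> y * R (cos y))"
        unfolding push_def using Dr eq by (simp add: sum_distrib_right)
    qed
    also have "\<dots> = (\<Sum>y\<in>supp \<phi>. \<phi> y * R (cos y))"
      by (rule sum.group) (use Sphi in auto)
    also have "\<dots> = (\<Sum>y\<in>supp \<phi>. \<phi> y * (\<Sum>w\<in>{w\<in>supp \<psi>. w \<in> H #> (inv y \<otimes> x)}. \<psi> w))"
      using cosR Sphi by (intro sum.cong refl) auto
    finally show ?thesis using L by simp
  qed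
qed


lemma sum_carrier:
  assumes "finite A" "\<And>k. k \<in> A \<Longrightarrow> \<phi> k \<in> galg_carrier G"
  shows "(\<lambda>x. \<Sum>k\<in>A. \<phi> k x) \<in> galg_carrier G" "supp (\<lambda>x. \<Sum>k\<in>A. \<phi> k x) \<subseteq> (\<Union>k\<in>A. supp (\<phi> k))"
proof -
  show s: "supp (\<lambda>x. \<Sum>k\<in>A. \<phi> k x) \<subseteq> (\<Union>k\<in>A. supp (\<phi> k))"
  proof
    fix x assume "x \<in> supp (\<lambda>x. \<Sum>k\<in>A. \<phi> k x)"
    then have "(\<Sum>k\<in>A. \<phi> k x) \<noteq> 0" unfolding supp_def by simp
    then have "\<not> (\<forall>k\<in>A. \<phi> k x = 0)"
    proof (rule contrapos_nn)
      assume "\<forall>k\<in>A. \<phi> k x = 0"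
      then show "(\<Sum>k\<in>A. \<phi> k x) = 0" by (rule sum.neutral)
    qed
    then show "x \<in> (\<Union>k\<in>A. supp (\<phi> k))" unfolding supp_def by blast
  qed
  have "finite (\<Union>k\<in>A. supp (\<phi> k))" "(\<Union>k\<in>A. supp (\<phi> k)) \<subseteq> carrier G"
    using assms unfolding galg_carrier_iff by auto
  then show "(\<lambda>x. \<Sum>k\<in>A. \<phi> k x) \<in> galg_carrier G"
    unfolding galg_carrier_iff using s by (meson finite_subset order_trans)
qed

lemma push_sum:
  assumes "finite A" "\<And>k. k \<in> A \<Longrightarrow> \<phi> k \<in> galg_carrier G"
  shows "push G H (\<lambda>x. \<Sum>k\<in>A. \<phi> k x) C = (\<Sum>k\<in>A. push G H (\<phi> k) C)"
proof -
  define T where "T = (\<Union>k\<in>A. supp (\<phi> k))"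
  have T: "finite T" unfolding T_def using assms unfolding galg_carrier_iff by auto
  have "push G H (\<lambda>x. \<Sum>k\<in>A. \<phi> k x) C = (if C \<in> rcosets H then \<Sum>y\<in>{y\<in>T. y \<in> C}. \<Sum>k\<in>A. \<phi> k y else 0)"
    by (rule push_T[OF T]) (use sum_carrier(2)[OF assms] in \<open>simp add: T_def\<close>)
  also have "\<dots> = (\<Sum>k\<in>A. (if C \<in> rcosets H then \<Sum>y\<in>{y\<in>T. y \<in> C}. \<phi> k y else 0))"
    by (simp add: sum.swap[of _ _ A])
  also have "\<dots> = (\<Sum>k\<in>A. push G H (\<phi> k) C)"
    by (rule sum.cong[OF refl], rule push_T[OF T, symmetric]) (auto simp: T_def)
  finally show ?thesis .
qed

lemma push_zero: "push G H (\<lambda>x. 0) = (\<lambda>C. 0)"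
  unfolding push_def supp_def by auto

lemma push_one: "push G H (\<lambda>x. if x = \<one> then 1 else 0) = (\<lambda>C. if C = H then 1 else 0)"
proof
  fix C
  have sd: "supp (\<lambda>x. if x = \<one> then (1::'k::field) else 0) = {\<one>}" unfolding supp_def by auto
  have Hr: "H \<in> rcosets H" unfolding RCOSETS_def using coset_mult_one[OF subset] by force
  show "push G H (\<lambda>x. if x = \<one> then (1::'k::field) else 0) C = (if C = H then 1 else 0)"
  proof (cases "C \<in> rcosets H")
    case False
    then show ?thesis unfolding push_def using Hr by auto
  next
    case True
    then obtain c where c: "c \<in> carrier G" "C = H #> c" using rcosets_cases by blast
    have "\<one> \<in> C \<longleftrightarrow> C = H"
    proof
      assume "\<one> \<in> C"
      then have "H #> c = H #> \<one>" using repr_independence[OF _ c(1) subgroup_axioms] c(2) by blast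
      then show "C = H" using c(2) coset_mult_one[OF subset] by simp
    qed (use one_closed in simp)
    moreover have "{y\<in>{\<one>}. y \<in> C} = (if \<one> \<in> C then {\<one>} else {})" by auto
    ultimately show ?thesis unfolding push_def sd using True by simp
  qed
qed

lemma push_lift:
  assumes "f \<in> galg_carrier (G Mod H)"
  shows "\<exists>\<phi>\<in>galg_carrier G. push G H \<phi> = f"
proof -
  define rep where "rep = (\<lambda>C::'a set. SOME y. y \<in> C)"
  define \<phi> where "\<phi> = (\<lambda>x. if x \<in> carrier G \<and> rep (H #> x) = x then f (H #> x) else 0)"
  have fs: "finite (supp f)" "supp f \<subseteq> rcosets H" using assms unfolding galg_carrier_iff carrier_Mod by auto
  have sp: "supp \<phi> \<subseteq> rep ` supp f"
  proof
    fix x assume "x \<in> supp \<phi>"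
    then have "x \<in> carrier G" "rep (H #> x) = x" "f (H #> x) \<noteq> 0" unfolding supp_def \<phi>_def by (auto split: if_splits)
    then have "H #> x \<in> supp f" "x = rep (H #> x)" unfolding supp_def by simp_all
    then show "x \<in> rep ` supp f" by (rule rev_image_eqI)
  qed
  have "\<phi> \<in> galg_carrier G"
  proof -
    have "supp \<phi> \<subseteq> carrier G" unfolding supp_def \<phi>_def by auto
    moreover have "finite (supp \<phi>)" using finite_subset[OF sp finite_imageI[OF fs(1)]] .
    ultimately show ?thesis unfolding galg_carrier_iff by simp
  qed
  moreover have "push G H \<phi> = f"
  proof
    fix C
    show "push G H \<phi> C = f C"
    proof (cases "C \<in> rcosets H")
      case False
      then have "f C = 0" using fs(2) unfolding supp_def by blast
      then show ?thesis unfolding push_def using False by simp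
    next
      case True
      then obtain c where c: "c \<in> carrier G" "C = H #> c" using rcosets_cases by blast
      have "c \<in> C" using rcos_self[OF c(1) subgroup_axioms] c(2) by simp
      then have rC: "rep C \<in> C" unfolding rep_def by (rule someI)
      have rc: "rep C \<in> carrier G" using rC c r_coset_subset_G[OF subset c(1)] by blast
      have eqC: "\<And>y. y \<in> C \<Longrightarrow> H #> y = C"
        using repr_independence[OF _ c(1) subgroup_axioms] c(2) by blast
      have sub: "{y\<in>supp \<phi>. y \<in> C} \<subseteq> {rep C}"
      proof
        fix y assume "y \<in> {y\<in>supp \<phi>. y \<in> C}"
        then have "rep (H #> y) = y" "y \<in> C" unfolding supp_def \<phi>_def by (auto split: if_splits)
        then show "y \<in> {rep C}" using eqC by auto
      qed
      have "(\<Sum>y\<in>{y\<in>supp \<phi>. y \<in> C}. \<phi> y) = (\<Sum>y\<in>{rep C}. \<phi> y)"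
        by (rule sum.mono_neutral_left) (use sub rC in \<open>auto simp: supp_def\<close>)
      also have "\<dots> = f C" unfolding \<phi>_def using rc eqC[OF rC] by simp
      finally show ?thesis unfolding push_def using True by simp
    qed
  qed
  ultimately show ?thesis by blast
qed


lemma push_at:
  assumes "finite T" "T \<subseteq> carrier G" "supp \<phi> \<subseteq> T" "x \<in> carrier G"
  shows "push G H \<phi> (H #> x) = (\<Sum>y\<in>{y\<in>T. x \<otimes> inv y \<in> H}. \<phi> y)"
proof -
  have "H #> x \<in> rcosets H" unfolding RCOSETS_def using assms(4) by auto
  moreover have "{y\<in>T. y \<in> H #> x} = {y\<in>T. x \<otimes> inv y \<in> H}"
    using mem_rcos_iff[OF assms(4)] assms(2) by blast
  ultimately show ?thesis using push_T[OF assms(1,3)] by simp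
qed

lemma push_eq_iff:
  assumes "finite T" "T \<subseteq> carrier G" "supp \<phi> \<subseteq> T" "supp \<psi> \<subseteq> T"
  shows "push G H \<phi> = push G H \<psi> \<longleftrightarrow>
    (\<forall>x\<in>T. (\<Sum>y\<in>{y\<in>T. x \<otimes> inv y \<in> H}. \<phi> y) = (\<Sum>y\<in>{y\<in>T. x \<otimes> inv y \<in> H}. \<psi> y))"
proof
  assume "push G H \<phi> = push G H \<psi>"
  then show "\<forall>x\<in>T. (\<Sum>y\<in>{y\<in>T. x \<otimes> inv y \<in> H}. \<phi> y) = (\<Sum>y\<in>{y\<in>T. x \<otimes> inv y \<in> H}. \<psi> y)"
    using push_at[OF assms(1,2,3)] push_at[OF assms(1,2,4)] assms(2) by (metis subsetD)
next
  assume R: "\<forall>x\<in>T. (\<Sum>y\<in>{y\<in>T. x \<otimes> inv y \<in> H}. \<phi> y) = (\<Sum>y\<in>{y\<in>T. x \<otimes> inv y \<in> H}. \<psi> y)"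
  show "push G H \<phi> = push G H \<psi>"
  proof
    fix C
    show "push G H \<phi> C = push G H \<psi> C"
    proof (cases "C \<in> rcosets H")
      case False
      then show ?thesis using push_T[OF assms(1,3)] push_T[OF assms(1,4)] by simp
    next
      case True
      then obtain c where c: "c \<in> carrier G" "C = H #> c" using rcosets_cases by blast
      show ?thesis
      proof (cases "\<exists>x\<in>T. x \<in> C")
        case True
        then obtain x where x: "x \<in> T" "x \<in> C" by blast
        have "C = H #> x" using repr_independence[OF _ c(1) subgroup_axioms] x(2) c(2) by blast
        then show ?thesis using push_at[OF assms(1,2,3)] push_at[OF assms(1,2,4)] R x(1) assms(2) by auto
      next
        case False
        then have e: "{y\<in>T. y \<in> C} = {}" by auto
        show ?thesis by (simp only: push_T[OF assms(1,3)] push_T[OF assms(1,4)] e sum.empty if_cancel)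
      qed
    qed
  qed
qed

lemma mat_mul_push:
  assumes "\<And>i k. a i k \<in> galg_carrier G" "\<And>i k. b i k \<in> galg_carrier G"
    "\<And>i k. i < n \<Longrightarrow> k < n \<Longrightarrow> A i k = push G H (a i k)"
    "\<And>i k. i < n \<Longrightarrow> k < n \<Longrightarrow> B i k = push G H (b i k)"
  shows "mat_mul (group_algebra (G Mod H)) n A B i j = (if i < n \<and> j < n
     then push G H (\<lambda>x. \<Sum>k<n. galg_mult G (a i k) (b k j) x) else (\<lambda>C. 0))"
  proof (cases "i < n \<and> j < n")
    case False
    then show ?thesis by (auto simp: mat_mul_def)
  next
    case True
    have e: "\<And>k. k \<in> {..<n} \<Longrightarrow> A i k \<otimes>\<^bsub>group_algebra (G Mod H)\<^esub> B k j = push G H (galg_mult G (a i k) (b k j))"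
      using True assms by (simp add: push_hom)
    have c: "\<And>k. k \<in> {..<n} \<Longrightarrow> A i k \<otimes>\<^bsub>group_algebra (G Mod H)\<^esub> B k j \<in> galg_carrier (G Mod H)"
      using e push_carrier[OF conv_carrier[OF assms(1,2)]] by simp
    have "mat_mul (group_algebra (G Mod H)) n A B i j
       = (\<lambda>C. \<Sum>k<n. (A i k \<otimes>\<^bsub>group_algebra (G Mod H)\<^esub> B k j) C)"
      unfolding mat_mul_def using True ga_finsum[OF finite_lessThan c] by simp
    also have "\<dots> = (\<lambda>C. \<Sum>k<n. push G H (galg_mult G (a i k) (b k j)) C)"
      using e by simp
    also have "\<dots> = push G H (\<lambda>x. \<Sum>k<n. galg_mult G (a i k) (b k j) x)"
      using push_sum[OF finite_lessThan[of n], where \<phi>="\<lambda>k. galg_mult G (a i k) (b k j)", OF conv_carrier[OF assms(1,2)]]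
      by (intro ext) simp
    finally show ?thesis using True by simp
qed

lemma mat_id_push:
  "mat_id (group_algebra (G Mod H) :: ('a set \<Rightarrow> 'k::field) ring) n = (\<lambda>i j. if i < n \<and> j < n
     then push G H (if i = j then (\<lambda>x. if x = \<one> then 1 else 0) else (\<lambda>x. 0)) else (\<lambda>C. 0))"
  unfolding mat_id_def by (intro ext) (simp add: push_one push_zero)

end


lemma mm_iff:
  fixes G :: "('a, 'c) monoid_scheme" (structure)
  fixes Am Bm :: "nat \<Rightarrow> nat \<Rightarrow> 'a set \<Rightarrow> 'k::field"
  assumes "M \<lhd> G" "\<And>i k. a i k \<in> galg_carrier G" "\<And>i k. b i k \<in> galg_carrier G"
    "\<And>i k. i < n \<Longrightarrow> k < n \<Longrightarrow> Am i k = push G M (a i k)"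
    "\<And>i k. i < n \<Longrightarrow> k < n \<Longrightarrow> Bm i k = push G M (b i k)"
  shows "mat_mul (group_algebra (G Mod M)) n Am Bm = mat_id (group_algebra (G Mod M)) n \<longleftrightarrow>
    (\<forall>i<n. \<forall>j<n. push G M (\<lambda>x. \<Sum>k<n. galg_mult G (a i k) (b k j) x)
        = push G M (if i = j then (\<lambda>x. if x = \<one>\<^bsub>G\<^esub> then 1 else 0) else (\<lambda>x. 0)))"
proof -
  interpret M: normal M G by fact
  have mm: "\<And>i j. mat_mul (group_algebra (G Mod M)) n Am Bm i j = (if i < n \<and> j < n
     then push G M (\<lambda>x. \<Sum>k<n. galg_mult G (a i k) (b k j) x) else (\<lambda>C. 0))"
    by (rule M.mat_mul_push) (use assms in auto)
  show ?thesis
  proof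
    assume eq: "mat_mul (group_algebra (G Mod M)) n Am Bm = mat_id (group_algebra (G Mod M)) n"
    show "\<forall>i<n. \<forall>j<n. push G M (\<lambda>x. \<Sum>k<n. galg_mult G (a i k) (b k j) x)
        = push G M (if i = j then (\<lambda>x. if x = \<one>\<^bsub>G\<^esub> then 1 else 0) else (\<lambda>x. 0))"
    proof (intro allI impI)
      fix i j assume ij: "i < n" "j < n"
      have "mat_mul (group_algebra (G Mod M)) n Am Bm i j = mat_id (group_algebra (G Mod M)) n i j"
        using eq by simp
      then show "push G M (\<lambda>x. \<Sum>k<n. galg_mult G (a i k) (b k j) x)
        = push G M (if i = j then (\<lambda>x. if x = \<one>\<^bsub>G\<^esub> then 1 else 0) else (\<lambda>x. 0))"
        unfolding mm M.mat_id_push using ij by simp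
    qed
  next
    assume R: "\<forall>i<n. \<forall>j<n. push G M (\<lambda>x. \<Sum>k<n. galg_mult G (a i k) (b k j) x)
        = push G M (if i = j then (\<lambda>x. if x = \<one>\<^bsub>G\<^esub> then 1 else 0) else (\<lambda>x. 0))"
    show "mat_mul (group_algebra (G Mod M)) n Am Bm = mat_id (group_algebra (G Mod M)) n"
    proof (rule ext, rule ext)
      fix i j
      show "mat_mul (group_algebra (G Mod M)) n Am Bm i j = mat_id (group_algebra (G Mod M)) n i j"
        unfolding mm M.mat_id_push using R by simp
    qed
  qed
qed

lemma push_transfer:
  fixes G :: "('a, 'c) monoid_scheme" (structure)
  assumes "M \<lhd> G" "M' \<lhd> G" "finite T" "T \<subseteq> carrier G" "supp \<phi> \<subseteq> T" "supp \<psi> \<subseteq> T"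
    "\<forall>x\<in>T. \<forall>y\<in>T. x \<otimes>\<^bsub>G\<^esub> inv\<^bsub>G\<^esub> y \<in> M \<longleftrightarrow> x \<otimes>\<^bsub>G\<^esub> inv\<^bsub>G\<^esub> y \<in> M'"
  shows "push G M \<phi> = push G M \<psi> \<longleftrightarrow> push G M' \<phi> = push G M' \<psi>"
proof -
  interpret M: normal M G by fact
  interpret M': normal M' G by fact
  have e: "\<And>x. x \<in> T \<Longrightarrow> {y\<in>T. x \<otimes>\<^bsub>G\<^esub> inv\<^bsub>G\<^esub> y \<in> M} = {y\<in>T. x \<otimes>\<^bsub>G\<^esub> inv\<^bsub>G\<^esub> y \<in> M'}"
    using assms(7) by blast
  show ?thesis
    unfolding M.push_eq_iff[OF assms(3-6)] M'.push_eq_iff[OF assms(3-6)]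
    using e by auto
qed


lemma lift_matrix:
  fixes G :: "('a, 'c) monoid_scheme" (structure)
  assumes "N \<lhd> G" "A \<in> mats (group_algebra (G Mod N) :: ('a set \<Rightarrow> 'k::field) ring) n"
  shows "\<exists>a. (\<forall>i k. a i k \<in> galg_carrier G) \<and> (\<forall>i k. i < n \<longrightarrow> k < n \<longrightarrow> A i k = push G N (a i k))"
proof -
  interpret N: normal N G by fact
  have "\<forall>i k. \<exists>\<phi>. \<phi> \<in> galg_carrier G \<and> (i < n \<longrightarrow> k < n \<longrightarrow> A i k = push G N \<phi>)"
  proof (intro allI)
    fix i k
    show "\<exists>\<phi>. \<phi> \<in> galg_carrier G \<and> (i < n \<longrightarrow> k < n \<longrightarrow> A i k = push G N \<phi>)"
    proof (cases "i < n \<and> k < n")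
      case True
      then have "A i k \<in> galg_carrier (G Mod N)" using assms(2) unfolding mats_def by simp
      then obtain \<phi> where "\<phi> \<in> galg_carrier G" "push G N \<phi> = A i k" using N.push_lift by blast
      then show ?thesis by metis
    next
      case False
      have "(\<lambda>x. 0::'k) \<in> galg_carrier G" unfolding galg_carrier_iff supp_def by simp
      then show ?thesis using False by blast
    qed
  qed
  then show ?thesis by metis
qed

lemma bad_local:
  fixes G :: "('a, 'c) monoid_scheme" (structure)
  assumes "group G" "N \<lhd> G"
    "\<not> stably_finite (group_algebra (G Mod N) :: ('a set \<Rightarrow> 'k::field) ring)"
  shows "\<exists>F. finite F \<and> F \<subseteq> carrier G \<and> (\<forall>N'. N' \<lhd> G \<longrightarrow> (\<forall>x\<in>F. x \<in> N' \<longleftrightarrow> x \<in> N) \<longrightarrow>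
     \<not> stably_finite (group_algebra (G Mod N') :: ('a set \<Rightarrow> 'k) ring))"
proof -
  interpret N: normal N G by fact
  let ?Q = "group_algebra (G Mod N) :: ('a set \<Rightarrow> 'k::field) ring"
  obtain n A B where AB: "A \<in> mats ?Q n" "B \<in> mats ?Q n" "mat_mul ?Q n A B = mat_id ?Q n"
    "mat_mul ?Q n B A \<noteq> mat_id ?Q n"
    using assms(3) unfolding stably_finite_def by blast
  obtain a where a: "\<And>i k. a i k \<in> galg_carrier G" "\<And>i k. i < n \<Longrightarrow> k < n \<Longrightarrow> A i k = push G N (a i k)"
    using lift_matrix[OF assms(2) AB(1)] by blast
  obtain b where b: "\<And>i k. b i k \<in> galg_carrier G" "\<And>i k. i < n \<Longrightarrow> k < n \<Longrightarrow> B i k = push G N (b i k)"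
    using lift_matrix[OF assms(2) AB(2)] by blast
  define Mab where "Mab = (\<lambda>i j x. \<Sum>k<n. galg_mult G (a i k) (b k j) x)"
  define Mba where "Mba = (\<lambda>i j x. \<Sum>k<n. galg_mult G (b i k) (a k j) x)"
  define Id where "Id = (\<lambda>i j::nat. if i = j then (\<lambda>x. if x = \<one> then (1::'k) else 0) else (\<lambda>x. 0))"
  define T where "T = insert \<one> (\<Union>i<n. \<Union>j<n. supp (Mab i j) \<union> supp (Mba i j))"
  have Mc: "Mab i j \<in> galg_carrier G" "Mba i j \<in> galg_carrier G" for i j
    unfolding Mab_def Mba_def
    by (rule N.sum_carrier(1)[OF finite_lessThan N.conv_carrier[OF a(1) b(1)]],
        rule N.sum_carrier(1)[OF finite_lessThan N.conv_carrier[OF b(1) a(1)]])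
  have T: "finite T" "T \<subseteq> carrier G"
    unfolding T_def using Mc unfolding galg_carrier_iff by (auto simp: subset_iff)
  have sT: "supp (Mab i j) \<subseteq> T" "supp (Mba i j) \<subseteq> T" "supp (Id i j) \<subseteq> T" if "i < n" "j < n" for i j
    unfolding T_def Id_def supp_def using that by auto
  define F where "F = (\<lambda>(x, y). x \<otimes> inv y) ` (T \<times> T)"
  have "finite F" "F \<subseteq> carrier G" unfolding F_def using T by auto
  moreover have "\<not> stably_finite (group_algebra (G Mod N') :: ('a set \<Rightarrow> 'k) ring)"
    if N': "N' \<lhd> G" "\<forall>x\<in>F. x \<in> N' \<longleftrightarrow> x \<in> N" for N'
  proof
    interpret N': normal N' G by fact
    let ?Q' = "group_algebra (G Mod N') :: ('a set \<Rightarrow> 'k::field) ring"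
    assume sf: "stably_finite ?Q'"
    have agree: "\<forall>x\<in>T. \<forall>y\<in>T. x \<otimes> inv y \<in> N \<longleftrightarrow> x \<otimes> inv y \<in> N'"
      using N'(2) unfolding F_def by auto
    have tr: "push G N (M i j) = push G N (Id i j) \<longleftrightarrow> push G N' (M i j) = push G N' (Id i j)"
      if "i < n" "j < n" "supp (M i j) \<subseteq> T" for M i j
      by (rule push_transfer[OF assms(2) N'(1) T that(3) sT(3)[OF that(1,2)] agree])
    define A' where "A' = (\<lambda>i k. push G N' (a i k))"
    define B' where "B' = (\<lambda>i k. push G N' (b i k))"
    have mats': "A' \<in> mats ?Q' n" "B' \<in> mats ?Q' n"
      unfolding mats_def A'_def B'_def using N'.push_carrier[OF a(1)] N'.push_carrier[OF b(1)] by auto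
    have e1: "mat_mul ?Q n A B = mat_id ?Q n \<longleftrightarrow> (\<forall>i<n. \<forall>j<n. push G N (Mab i j) = push G N (Id i j))"
      unfolding Mab_def Id_def by (rule mm_iff[OF assms(2) a(1) b(1)]) (use a(2) b(2) in auto)
    have e2: "mat_mul ?Q' n A' B' = mat_id ?Q' n \<longleftrightarrow> (\<forall>i<n. \<forall>j<n. push G N' (Mab i j) = push G N' (Id i j))"
      unfolding Mab_def Id_def by (rule mm_iff[OF N'(1) a(1) b(1)]) (simp_all add: A'_def B'_def)
    have e3: "mat_mul ?Q' n B' A' = mat_id ?Q' n \<longleftrightarrow> (\<forall>i<n. \<forall>j<n. push G N' (Mba i j) = push G N' (Id i j))"
      unfolding Mba_def Id_def by (rule mm_iff[OF N'(1) b(1) a(1)]) (simp_all add: A'_def B'_def)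
    have e4: "mat_mul ?Q n B A = mat_id ?Q n \<longleftrightarrow> (\<forall>i<n. \<forall>j<n. push G N (Mba i j) = push G N (Id i j))"
      unfolding Mba_def Id_def by (rule mm_iff[OF assms(2) b(1) a(1)]) (use a(2) b(2) in auto)
    have t1: "(\<forall>i<n. \<forall>j<n. push G N (Mab i j) = push G N (Id i j)) \<longleftrightarrow> (\<forall>i<n. \<forall>j<n. push G N' (Mab i j) = push G N' (Id i j))"
    proof -
      have "\<And>i j. i < n \<Longrightarrow> j < n \<Longrightarrow> (push G N (Mab i j) = push G N (Id i j)) = (push G N' (Mab i j) = push G N' (Id i j))"
        by (rule tr) (simp_all add: sT)
      then show ?thesis by simp
    qed
    have t2: "(\<forall>i<n. \<forall>j<n. push G N (Mba i j) = push G N (Id i j)) \<longleftrightarrow> (\<forall>i<n. \<forall>j<n. push G N' (Mba i j) = push G N' (Id i j))"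
    proof -
      have "\<And>i j. i < n \<Longrightarrow> j < n \<Longrightarrow> (push G N (Mba i j) = push G N (Id i j)) = (push G N' (Mba i j) = push G N' (Id i j))"
        by (rule tr) (simp_all add: sT)
      then show ?thesis by simp
    qed
    have "mat_mul ?Q' n A' B' = mat_id ?Q' n" using e1 e2 t1 AB(3) by simp
    then have "mat_mul ?Q' n B' A' = mat_id ?Q' n"
      using sf mats' unfolding stably_finite_def by blast
    then have "mat_mul ?Q n B A = mat_id ?Q n" using e3 e4 t2 by simp
    then show False using AB(4) by simp
  qed
  ultimately show ?thesis by blast
qed



lemma nbhd_open:
  assumes "finite F" "F \<subseteq> carrier G"
  shows "openin (powerset_topology G) {q \<in> topspace (powerset_topology G). \<forall>x\<in>F. q x = p x}"
  using assms
proof (induction F rule: finite_induct)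
  case empty
  then show ?case by simp
next
  case (insert a F)
  have c: "continuous_map (powerset_topology G) (discrete_topology (UNIV::bool set)) (\<lambda>q. q a)"
    unfolding powerset_topology_def
    using insert.prems by (intro continuous_map_product_projection) auto
  have o: "openin (powerset_topology G) {q \<in> topspace (powerset_topology G). q a \<in> {p a}}"
    by (rule openin_continuous_map_preimage[OF c]) simp
  have "{q \<in> topspace (powerset_topology G). \<forall>x\<in>insert a F. q x = p x} =
     {q \<in> topspace (powerset_topology G). q a \<in> {p a}} \<inter> {q \<in> topspace (powerset_topology G). \<forall>x\<in>F. q x = p x}"
    by auto
  then show ?case using o insert by (metis (no_types, lifting) insert_subset openin_Int)
qed

lemma topspace_P: "topspace (powerset_topology G) = (carrier G \<rightarrow>\<^sub>E (UNIV :: bool set))"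
  unfolding powerset_topology_def by (simp add: topspace_product_topology)

lemma stp_in: "set_to_point G N \<in> topspace (powerset_topology G)"
  unfolding topspace_P set_to_point_def by auto

lemma stp_inj:
  assumes "N \<subseteq> carrier G" "N' \<subseteq> carrier G" "set_to_point G N = set_to_point G N'"
  shows "N = N'"
proof -
  have "\<And>x. x \<in> carrier G \<Longrightarrow> (x \<in> N) = (x \<in> N')"
    using assms(3) unfolding set_to_point_def by (metis restrict_apply')
  then show ?thesis using assms(1,2) by blast
qed

definition viol :: "('a, 'c) monoid_scheme \<Rightarrow> ('a \<Rightarrow> bool) \<Rightarrow> bool" where
  "viol G p \<longleftrightarrow> \<not> p \<one>\<^bsub>G\<^esub> \<or> (\<exists>a\<in>carrier G. \<exists>b\<in>carrier G. p a \<and> p b \<and> \<not> p (a \<otimes>\<^bsub>G\<^esub> b))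
     \<or> (\<exists>a\<in>carrier G. p a \<and> \<not> p (inv\<^bsub>G\<^esub> a))
     \<or> (\<exists>x\<in>carrier G. \<exists>h\<in>carrier G. p h \<and> \<not> p (x \<otimes>\<^bsub>G\<^esub> h \<otimes>\<^bsub>G\<^esub> inv\<^bsub>G\<^esub> x))"

lemma viol_X:
  fixes G :: "('a, 'c) monoid_scheme" (structure)
  assumes "group G" "q \<in> normal_subgroup_space G"
  shows "\<not> viol G q"
proof -
  interpret group G by fact
  obtain N where N: "N \<lhd> G" "q = set_to_point G N"
    using assms(2) unfolding normal_subgroup_space_def by auto
  have sg: "subgroup N G" using N(1) normal_imp_subgroup by blast
  have q: "\<And>x. x \<in> carrier G \<Longrightarrow> q x = (x \<in> N)" using N(2) unfolding set_to_point_def by simp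
  have c: "\<And>x h. x \<in> carrier G \<Longrightarrow> h \<in> N \<Longrightarrow> x \<otimes> h \<otimes> inv x \<in> N"
    using N(1) normal_inv_iff by blast
  show ?thesis unfolding viol_def
    using sg c by (auto simp: q subgroup.one_closed subgroup.m_closed subgroup.m_inv_closed)
qed

lemma notviol_X:
  fixes G :: "('a, 'c) monoid_scheme" (structure)
  assumes "group G" "q \<in> topspace (powerset_topology G)" "\<not> viol G q"
  shows "q \<in> normal_subgroup_space G"
proof -
  interpret group G by fact
  define N where "N = {x \<in> carrier G. q x}"
  have qN: "q = set_to_point G N"
  proof
    fix x show "q x = set_to_point G N x"
      using assms(2) unfolding topspace_P set_to_point_def N_def PiE_def extensional_def by auto
  qed
  have sg: "subgroup N G"
  proof (rule subgroupI)
    show "N \<subseteq> carrier G" unfolding N_def by blast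
    have "q \<one>" using assms(3) unfolding viol_def by blast
    then show "N \<noteq> {}" unfolding N_def by blast
    fix a assume "a \<in> N"
    then have "a \<in> carrier G" "q a" unfolding N_def by auto
    then have "q (inv a)" using assms(3) unfolding viol_def by blast
    then show "inv a \<in> N" using \<open>a \<in> carrier G\<close> unfolding N_def by simp
  next
    fix a b assume "a \<in> N" "b \<in> N"
    then have "a \<in> carrier G" "q a" "b \<in> carrier G" "q b" unfolding N_def by auto
    then have "q (a \<otimes> b)" using assms(3) unfolding viol_def by blast
    then show "a \<otimes> b \<in> N" using \<open>a \<in> carrier G\<close> \<open>b \<in> carrier G\<close> unfolding N_def by simp
  qed
  have "N \<lhd> G" unfolding normal_inv_iff using sg assms(3) by (auto simp: viol_def N_def)
  then show ?thesis unfolding normal_subgroup_space_def qN by blast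
qed

lemma viol_local:
  fixes G :: "('a, 'c) monoid_scheme" (structure)
  assumes "group G" "viol G p"
  shows "\<exists>F. finite F \<and> F \<subseteq> carrier G \<and> (\<forall>q. (\<forall>x\<in>F. q x = p x) \<longrightarrow> viol G q)"
proof -
  interpret group G by fact
  consider "\<not> p \<one>" | a b where "a\<in>carrier G" "b\<in>carrier G" "p a" "p b" "\<not> p (a \<otimes> b)"
    | a where "a\<in>carrier G" "p a" "\<not> p (inv a)"
    | x h where "x\<in>carrier G" "h\<in>carrier G" "p h" "\<not> p (x \<otimes> h \<otimes> inv x)"
    using assms(2) unfolding viol_def by blast
  then show ?thesis
  proof cases
    case 1
    show ?thesis
    proof (intro exI[of _ "{\<one>}"] conjI allI impI)
      fix q assume "\<forall>x\<in>{\<one>}. q x = p x"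
      then show "viol G q" using 1 unfolding viol_def by simp
    qed simp_all
  next
    case 2
    show ?thesis
    proof (intro exI[of _ "{a, b, a \<otimes> b}"] conjI allI impI)
      fix q assume "\<forall>x\<in>{a, b, a \<otimes> b}. q x = p x"
      then have "q a" "q b" "\<not> q (a \<otimes> b)" using 2 by auto
      then show "viol G q" using 2 unfolding viol_def by blast
    qed (use 2 in simp_all)
  next
    case 3
    show ?thesis
    proof (intro exI[of _ "{a, inv a}"] conjI allI impI)
      fix q assume "\<forall>x\<in>{a, inv a}. q x = p x"
      then have "q a" "\<not> q (inv a)" using 3 by auto
      then show "viol G q" using 3 unfolding viol_def by blast
    qed (use 3 in simp_all)
  next
    case 4
    show ?thesis
    proof (intro exI[of _ "{h, x \<otimes> h \<otimes> inv x}"] conjI allI impI)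
      fix q assume "\<forall>y\<in>{h, x \<otimes> h \<otimes> inv x}. q y = p y"
      then have "q h" "\<not> q (x \<otimes> h \<otimes> inv x)" using 4 by auto
      then show "viol G q" using 4 unfolding viol_def by blast
    qed (use 4 in simp_all)
  qed
qed

lemma nss_closed:
  assumes "group G"
  shows "closedin (powerset_topology G) (normal_subgroup_space G)"
proof -
  let ?P = "powerset_topology G"
  have sub: "normal_subgroup_space G \<subseteq> topspace ?P"
    unfolding normal_subgroup_space_def using stp_in by blast
  have "openin ?P (topspace ?P - normal_subgroup_space G)"
  proof (subst openin_subopen, intro ballI)
    fix p assume p: "p \<in> topspace ?P - normal_subgroup_space G"
    then have "viol G p" using notviol_X[OF assms, of p] by (meson DiffD1 DiffD2)
    then obtain F where F: "finite F" "F \<subseteq> carrier G" "\<forall>q. (\<forall>x\<in>F. q x = p x) \<longrightarrow> viol G q"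
      using viol_local[OF assms \<open>viol G p\<close>] by blast
    show "\<exists>T. openin ?P T \<and> p \<in> T \<and> T \<subseteq> topspace ?P - normal_subgroup_space G"
    proof (rule exI[of _ "{q \<in> topspace ?P. \<forall>x\<in>F. q x = p x}"], intro conjI)
      show "openin ?P {q \<in> topspace ?P. \<forall>x\<in>F. q x = p x}" using nbhd_open[OF F(1,2)] .
      show "p \<in> {q \<in> topspace ?P. \<forall>x\<in>F. q x = p x}" using p by simp
      show "{q \<in> topspace ?P. \<forall>x\<in>F. q x = p x} \<subseteq> topspace ?P - normal_subgroup_space G"
      proof
        fix q assume q: "q \<in> {q \<in> topspace ?P. \<forall>x\<in>F. q x = p x}"
        then have "viol G q" using F(3) by blast
        then show "q \<in> topspace ?P - normal_subgroup_space G" using q viol_X[OF assms, of q] by blast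
      qed
    qed
  qed
  then show ?thesis unfolding closedin_def using sub by blast
qed

theorem corollary1p5:
  fixes G :: "('a, 'c) monoid_scheme"
  assumes "group G"
  defines "S \<equiv> set_to_point G ` {N. N \<lhd> G \<and>
              stably_finite (group_algebra (G Mod N) :: ('a set \<Rightarrow> 'k::field) ring)}"
  shows "closedin (subtopology (powerset_topology G) (normal_subgroup_space G)) S
       \<and> compactin (powerset_topology G) S"
proof -
  let ?P = "powerset_topology G"
  let ?X = "normal_subgroup_space G"
  define Bad where "Bad = {N. N \<lhd> G \<and>
     \<not> stably_finite (group_algebra (G Mod N) :: ('a set \<Rightarrow> 'k::field) ring)}"
  have "\<forall>N\<in>Bad. \<exists>F. finite F \<and> F \<subseteq> carrier G \<and> (\<forall>N'. N' \<lhd> G \<longrightarrow> (\<forall>x\<in>F. x \<in> N' \<longleftrightarrow> x \<in> N) \<longrightarrow> N' \<in> Bad)"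
  proof
    fix N assume "N \<in> Bad"
    then have N: "N \<lhd> G" "\<not> stably_finite (group_algebra (G Mod N) :: ('a set \<Rightarrow> 'k::field) ring)"
      unfolding Bad_def by auto
    from bad_local[OF assms(1) N] obtain F where
      "finite F \<and> F \<subseteq> carrier G \<and> (\<forall>N'. N' \<lhd> G \<longrightarrow> (\<forall>x\<in>F. x \<in> N' \<longleftrightarrow> x \<in> N) \<longrightarrow>
     \<not> stably_finite (group_algebra (G Mod N') :: ('a set \<Rightarrow> 'k) ring))" by blast
    then show "\<exists>F. finite F \<and> F \<subseteq> carrier G \<and> (\<forall>N'. N' \<lhd> G \<longrightarrow> (\<forall>x\<in>F. x \<in> N' \<longleftrightarrow> x \<in> N) \<longrightarrow> N' \<in> Bad)"
      unfolding Bad_def by blast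
  qed
  from bchoice[OF this] obtain FF where FF0: "\<forall>N\<in>Bad. finite (FF N) \<and> FF N \<subseteq> carrier G \<and> (\<forall>N'. N' \<lhd> G \<longrightarrow> (\<forall>x\<in>FF N. x \<in> N' \<longleftrightarrow> x \<in> N) \<longrightarrow> N' \<in> Bad)"
    by blast
  have FF: "\<And>N. N \<in> Bad \<Longrightarrow> finite (FF N) \<and> FF N \<subseteq> carrier G \<and> (\<forall>N'. N' \<lhd> G \<longrightarrow> (\<forall>x\<in>FF N. x \<in> N' \<longleftrightarrow> x \<in> N) \<longrightarrow> N' \<in> Bad)"
    using FF0 by blast
  define W where "W = (\<Union>N\<in>Bad. {q \<in> topspace ?P. \<forall>x\<in>FF N. q x = set_to_point G N x})"
  have Wo: "openin ?P W" unfolding W_def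
  proof (intro openin_Union)
    fix V assume "V \<in> (\<lambda>N. {q \<in> topspace ?P. \<forall>x\<in>FF N. q x = set_to_point G N x}) ` Bad"
    then obtain N where "N \<in> Bad" "V = {q \<in> topspace ?P. \<forall>x\<in>FF N. q x = set_to_point G N x}" by blast
    then show "openin ?P V" using FF[of N] nbhd_open by blast
  qed
  have sub: "\<And>N. N \<lhd> G \<Longrightarrow> N \<subseteq> carrier G"
    by (simp add: normal_imp_subgroup subgroup.subset)
  have SX: "S = ?X \<inter> (topspace ?P - W)"
  proof
    show "S \<subseteq> ?X \<inter> (topspace ?P - W)"
    proof
      fix p assume "p \<in> S"
      then obtain N where N: "N \<lhd> G" "N \<notin> Bad" "p = set_to_point G N"
        unfolding S_def Bad_def by auto
      have "p \<notin> W"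
      proof
        assume "p \<in> W"
        then obtain M where M: "M \<in> Bad" "\<forall>x\<in>FF M. p x = set_to_point G M x"
          unfolding W_def by auto
        have "\<forall>x\<in>FF M. x \<in> N \<longleftrightarrow> x \<in> M"
          using M(2) FF[OF M(1)] N(3) unfolding set_to_point_def by (auto simp: subset_iff)
        then have "N \<in> Bad" using FF[OF M(1)] N(1) by blast
        then show False using N(2) by simp
      qed
      then show "p \<in> ?X \<inter> (topspace ?P - W)"
        using N stp_in unfolding normal_subgroup_space_def by auto
    qed
  next
    show "?X \<inter> (topspace ?P - W) \<subseteq> S"
    proof
      fix p assume p: "p \<in> ?X \<inter> (topspace ?P - W)"
      then obtain N where N: "N \<lhd> G" "p = set_to_point G N"
        unfolding normal_subgroup_space_def by auto
      have "N \<notin> Bad"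
      proof
        assume "N \<in> Bad"
        then have "p \<in> W" unfolding W_def using N stp_in by auto
        then show False using p by auto
      qed
      then show "p \<in> S" unfolding S_def Bad_def using N by auto
    qed
  qed
  have Sc: "closedin ?P S"
    unfolding SX using nss_closed[OF assms(1)] Wo by (intro closedin_Int closedin_diff) auto
  have SsX: "S \<subseteq> ?X" using SX by auto
  have cs: "compact_space ?P"
    unfolding powerset_topology_def
    by (simp add: compact_space_product_topology compact_space_discrete_topology)
  show ?thesis
  proof
    show "closedin (subtopology ?P ?X) S"
      unfolding closedin_subtopology using Sc SsX by blast
    show "compactin ?P S" using closedin_compact_space[OF cs Sc] .
  qed
qed

end
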